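(* For $0\le n\le m$ let $\alpha_n:\mathbb R\to\mathbb R$ be polynomials. The differential operator $K=\sum_{n=0}^m\alpha_n(x)\frac{d^n}{dx^n}=\sum_{n=0}^m\alpha_n(A^\dagger)A^n$ acting on $f\in\mathcal C_0^\infty(\mathbb R)$ is dual, with duality function $D(x,n)=x^n$ ($x\in\mathbb R$, $n\in\mathbb N$), to the operator $\widehat K=\sum_{n=0}^m a^n\alpha_n(a^\dagger)$ acting on functions $f:\mathbb N\to\mathbb R$; that is, $K_lD=\widehat K_rD$.
   Context: $\mathbb N=\{0,1,2,\dots\}$. On smooth functions $f:\mathbb R\to\mathbb R$: $Af(x)=f'(x)$, $A^\dagger f(x)=xf(x)$. On functions $f:\mathbb N\to\mathbb R$: $af(n)=nf(n-1)$, $a^\dagger f(n)=f(n+1)$. For a polynomial $\alpha$, $\alpha(a^\dagger)$ is the corresponding polynomial in the operator $a^\dagger$, and $a^n\alpha_n(a^\dagger)$ means first apply $\alpha_n(a^\dagger)$ then $a^n$. Left/right actions: $(K_lD)(x,n)=(KD(\cdot,n))(x)$, $(\widehat K_rD)(x,n)=(\widehat KD(x,\cdot))(n)$. *)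

theory Defs
  imports "HOL-Analysis.Analysis" "HOL-Computational_Algebra.Polynomial"
begin

definition A_op :: "(real \<Rightarrow> real) \<Rightarrow> (real \<Rightarrow> real)" where
  "A_op f = deriv f"
definition A_dag :: "(real \<Rightarrow> real) \<Rightarrow> (real \<Rightarrow> real)" where
  "A_dag f = (\<lambda>x. x * f x)"

definition a_op :: "(nat \<Rightarrow> real) \<Rightarrow> (nat \<Rightarrow> real)" where
  "a_op f = (\<lambda>n. real n * f (n - 1))"
definition a_dag :: "(nat \<Rightarrow> real) \<Rightarrow> (nat \<Rightarrow> real)" where
  "a_dag f = (\<lambda>n. f (n + 1))"

definition op_poly :: "real poly \<Rightarrow> (('a \<Rightarrow> real) \<Rightarrow> ('a \<Rightarrow> real)) \<Rightarrow> ('a \<Rightarrow> real) \<Rightarrow> ('a \<Rightarrow> real)" where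
  "op_poly p T f = (\<lambda>x. \<Sum>i\<le>degree p. coeff p i * (T ^^ i) f x)"

definition K_op :: "(nat \<Rightarrow> real poly) \<Rightarrow> nat \<Rightarrow> (real \<Rightarrow> real) \<Rightarrow> (real \<Rightarrow> real)" where
  "K_op \<alpha> m f = (\<lambda>x. \<Sum>n\<le>m. op_poly (\<alpha> n) A_dag ((A_op ^^ n) f) x)"

definition Khat_op :: "(nat \<Rightarrow> real poly) \<Rightarrow> nat \<Rightarrow> (nat \<Rightarrow> real) \<Rightarrow> (nat \<Rightarrow> real)" where
  "Khat_op \<alpha> m f = (\<lambda>k. \<Sum>n\<le>m. (a_op ^^ n) (op_poly (\<alpha> n) a_dag f) k)"

definition Dfun :: "real \<Rightarrow> nat \<Rightarrow> real" where
  "Dfun x n = x ^ n"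

end

theory Submission
  imports Defs
begin

definition F :: "nat \<Rightarrow> nat \<Rightarrow> real" where
  "F k n = (\<Prod>i<n. real (k - i))"

lemma F_Suc: "F k (Suc n) = F k n * real (k - n)"
  by (simp add: F_def)

lemma A_pow: "(A_op ^^ n) (\<lambda>y. y ^ k) = (\<lambda>y. F k n * y ^ (k - n))"
proof (induction n)
  case 0 then show ?case by (simp add: F_def)
next
  case (Suc n)
  have "deriv (\<lambda>y. F k n * y ^ (k - n)) y = F k n * (real (k - n) * y ^ (k - n - 1))" for y :: real
    by (rule DERIV_imp_deriv) (auto intro!: derivative_eq_intros)
  then show ?case
    by (simp only: funpow.simps o_apply Suc.IH)
       (auto simp: A_op_def F_Suc fun_eq_iff)
qed

lemma A_dag_pow: "(A_dag ^^ i) g = (\<lambda>x. x ^ i * g x)"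
  by (induction i) (auto simp: A_dag_def fun_eq_iff)

lemma a_dag_pow: "(a_dag ^^ i) f = (\<lambda>j. f (j + i))"
  by (induction i) (auto simp: a_dag_def fun_eq_iff)

lemma a_op_pow: "(a_op ^^ n) g = (\<lambda>k. F k n * g (k - n))"
proof (induction n arbitrary: g)
  case 0 then show ?case by (simp add: F_def)
next
  case (Suc n)
  show ?case
    by (simp only: funpow_Suc_right o_apply Suc)
       (auto simp: a_op_def F_Suc fun_eq_iff diff_Suc split: nat.splits)
qed

lemma op_poly_A: "op_poly p A_dag g x = poly p x * g x"
  by (simp add: op_poly_def A_dag_pow poly_altdef sum_distrib_right mult.assoc)

lemma op_poly_a: "op_poly p a_dag (\<lambda>j. Dfun x j) j = poly p x * x ^ j"
  by (simp add: op_poly_def a_dag_pow poly_altdef sum_distrib_right Dfun_def power_add mult_ac sum_distrib_left)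

theorem theorem3p1:
  fixes \<alpha> :: "nat \<Rightarrow> real poly" and m :: nat
  shows "\<forall>x k. K_op \<alpha> m (\<lambda>y. Dfun y k) x = Khat_op \<alpha> m (\<lambda>j. Dfun x j) k"
proof (intro allI)
  fix x k
  have e: "(\<lambda>y. Dfun y k) = (\<lambda>y. y ^ k)" by (simp add: Dfun_def fun_eq_iff)
  show "K_op \<alpha> m (\<lambda>y. Dfun y k) x = Khat_op \<alpha> m (\<lambda>j. Dfun x j) k"
    unfolding K_op_def Khat_op_def e A_pow a_op_pow op_poly_A
    by (simp add: op_poly_a mult_ac)
qed

end
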